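(* Let $\mu$ be a probability measure on $\mathbb{R}$ with support in a bounded interval $[a,b]$ and $\operatorname{Ent}(\mu|\mathcal L^1)<\infty$, and suppose the interior of $A\cap\operatorname{supp}\mu$ is $\bigcup_i(a_i,b_i)$ with pairwise disjoint intervals. Let $l(x)=\min\{x-a_i,b_i-x\}$ for $x\in(a_i,b_i)$. Then $\int_{\bigcup_i(a_i,b_i)}|\log l(x)|\,d\mu(x)<\infty$ (and hence $-\sum_i\int_{a_i}^{b_i}\log(\min\{x-a_i,b_i-x\})\,d\mu(x)<\infty$) in each of the following cases: (H1a) $\mu$ has bounded density on $A$ and $\sum_i(b_i-a_i)\,|\log(b_i-a_i)|<\infty$; (H1b) $\sum_i(b_i-a_i)^{1-\delta}<\infty$ for some $\delta\in(0,1)$.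
   Context: $A$ is any Borel subset of $\mathbb{R}$ (in the paper, $A=\{x: F_\mu(x)=F_\nu(x)\}$ for a second probability measure $\nu$, $F_\rho$ denoting cumulative distribution functions). $\operatorname{Ent}(\mu|\mathcal L^1)=\int\log\frac{d\mu}{dx}\,d\mu$. *)

theory Defs
  imports "HOL-Probability.Probability"
begin

definition msupp :: "real measure \<Rightarrow> real set" where
  "msupp M = {x. \<forall>e>0. emeasure M (ball x e) > 0}"

definition endpoint_dist ::
  "'i set \<Rightarrow> ('i \<Rightarrow> real) \<Rightarrow> ('i \<Rightarrow> real) \<Rightarrow> real \<Rightarrow> real" where
  "endpoint_dist I ai bi x =
     (let i = (THE i. i \<in> I \<and> x \<in> {ai i<..<bi i}) in min (x - ai i) (bi i - x))"

end

theory Submission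
  imports Defs "HOL-Real_Asymp.Real_Asymp"
begin


lemma einterval_real: "einterval (ereal a) (ereal b) = {a<..<b}"
  by (auto simp: einterval_def)

lemma nn_powr_int:
  fixes L \<delta> :: real assumes L: "0 < L" and d: "0 < \<delta>" "\<delta> < 1"
  shows "(\<integral>\<^sup>+ t. indicator {0<..<L} t * ennreal (t powr (-\<delta>)) \<partial>lborel) = ennreal (L powr (1-\<delta>)/(1-\<delta>))"
proof -
  let ?F = "\<lambda>t::real. t powr (1-\<delta>)/(1-\<delta>)"
  let ?f = "\<lambda>t::real. t powr (-\<delta>)"
  have der: "\<And>x. ereal 0 < ereal x \<Longrightarrow> ereal x < ereal L \<Longrightarrow> DERIV ?F x :> ?f x"
  proof -
    fix x assume "ereal 0 < ereal x" "ereal x < ereal L"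
    then have x: "0 < x" by simp
    show "DERIV ?F x :> ?f x"
    proof -
      have "DERIV (\<lambda>t. t powr (1-\<delta>)) x :> (1-\<delta>) * x powr (1-\<delta>-1)"
        by (rule has_real_derivative_powr[OF x])
      from DERIV_cdivide[OF this, of "1-\<delta>"] show ?thesis using d by simp
    qed
  qed
  have cont: "\<And>x. ereal 0 < ereal x \<Longrightarrow> ereal x < ereal L \<Longrightarrow> isCont ?f x"
    by (auto intro!: continuous_intros)
  have ev: "eventually (\<lambda>x::real. 0 \<le> x) (at_right 0)"
    by (metis (mono_tags) eventually_at_right_less eventually_mono less_imp_le)
  have A: "((?F \<circ> real_of_ereal) \<longlongrightarrow> 0) (at_right (ereal 0))"
    using d ev by (auto simp: ereal_tendsto_simps intro!: tendsto_eq_intros)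
  have B: "((?F \<circ> real_of_ereal) \<longlongrightarrow> ?F L) (at_left (ereal L))"
    using d L by (auto simp: ereal_tendsto_simps intro!: tendsto_eq_intros)
  note ftc = interval_integral_FTC_nonneg[of "ereal 0" "ereal L" ?F ?f, OF _ der cont _ A B]
  have si: "set_integrable lborel {0<..<L} ?f" and val: "(LBINT x=ereal 0..ereal L. ?f x) = ?F L"
    using ftc L by (auto simp: einterval_real)
  have "(\<integral>\<^sup>+ t. indicator {0<..<L} t * ennreal (?f t) \<partial>lborel) = (\<integral>\<^sup>+ t. ennreal (indicator {0<..<L} t *\<^sub>R ?f t) \<partial>lborel)"
    by (intro nn_integral_cong) (auto split: split_indicator)
  also have "\<dots> = ennreal (LINT t|lborel. indicator {0<..<L} t *\<^sub>R ?f t)"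
    using si unfolding set_integrable_def by (intro nn_integral_eq_integral) auto
  also have "(LINT t|lborel. indicator {0<..<L} t *\<^sub>R ?f t) = ?F L"
    using val L by (simp add: interval_lebesgue_integral_def set_lebesgue_integral_def einterval_real)
  finally show ?thesis .
qed



lemma nn_ln_int:
  fixes L :: real assumes L: "0 < L"
  shows "(\<integral>\<^sup>+ t. indicator {0<..<L} t * ennreal (- ln (t / L)) \<partial>lborel) = ennreal L"
proof -
  let ?F = "\<lambda>t::real. t - t * ln (t / L)"
  let ?f = "\<lambda>t::real. - ln (t / L)"
  have der: "\<And>x. ereal 0 < ereal x \<Longrightarrow> ereal x < ereal L \<Longrightarrow> DERIV ?F x :> ?f x"
  proof -
    fix x assume "ereal 0 < ereal x" "ereal x < ereal L"
    then have x: "0 < x" by simp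
    show "DERIV ?F x :> ?f x"
      using x L by (auto intro!: derivative_eq_intros simp: field_simps)
  qed
  have cont: "\<And>x. ereal 0 < ereal x \<Longrightarrow> ereal x < ereal L \<Longrightarrow> isCont ?f x"
    using L by (auto intro!: continuous_intros)
  have nn: "AE x in lborel. ereal 0 < ereal x \<longrightarrow> ereal x < ereal L \<longrightarrow> 0 \<le> ?f x"
    using L by (auto simp: ln_div)
  have lim0: "((\<lambda>t::real. t - t * ln t + t * ln L) \<longlongrightarrow> 0) (at_right 0)"
    by real_asymp
  have A0: "(?F \<longlongrightarrow> 0) (at_right 0)"
  proof (rule Lim_transform_eventually[OF lim0])
    show "\<forall>\<^sub>F x in at_right 0. x - x * ln x + x * ln L = ?F x"
      using eventually_at_right_less[of "0::real"]
      by eventually_elim (use L in \<open>auto simp: ln_div algebra_simps\<close>)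
  qed
  have A: "((?F \<circ> real_of_ereal) \<longlongrightarrow> 0) (at_right (ereal 0))"
    using A0 by (simp add: at_right_ereal filterlim_filtermap o_def)
  have B: "((?F \<circ> real_of_ereal) \<longlongrightarrow> ?F L) (at_left (ereal L))"
    unfolding ereal_tendsto_simps using L by (auto intro!: tendsto_eq_intros)
  note ftc = interval_integral_FTC_nonneg[of "ereal 0" "ereal L" ?F ?f, OF _ der cont nn A B]
  have si: "set_integrable lborel {0<..<L} ?f" and val: "(LBINT x=ereal 0..ereal L. ?f x) = ?F L"
    using ftc L by (auto simp: einterval_real)
  have "(\<integral>\<^sup>+ t. indicator {0<..<L} t * ennreal (?f t) \<partial>lborel) = (\<integral>\<^sup>+ t. ennreal (indicator {0<..<L} t *\<^sub>R ?f t) \<partial>lborel)"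
    by (intro nn_integral_cong) (auto split: split_indicator)
  also have "\<dots> = ennreal (LINT t|lborel. indicator {0<..<L} t *\<^sub>R ?f t)"
    using si L unfolding set_integrable_def by (intro nn_integral_eq_integral) (auto simp: ln_div split: split_indicator)
  also have "(LINT t|lborel. indicator {0<..<L} t *\<^sub>R ?f t) = L"
    using val L by (simp add: interval_lebesgue_integral_def set_lebesgue_integral_def einterval_real)
  finally show ?thesis .
qed


lemma refl_bound:
  fixes \<psi> :: "real \<Rightarrow> ennreal" assumes [measurable]: "\<psi> \<in> borel_measurable borel" and "\<alpha> < \<beta>"
  shows "(\<integral>\<^sup>+ x. indicator {\<alpha><..<\<beta>} x * \<psi> (min (x - \<alpha>) (\<beta> - x)) \<partial>lborel)
     \<le> 2 * (\<integral>\<^sup>+ t. indicator {0<..<\<beta>-\<alpha>} t * \<psi> t \<partial>lborel)"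
proof -
  have pw: "indicator {\<alpha><..<\<beta>} x * \<psi> (min (x - \<alpha>) (\<beta> - x))
       \<le> indicator {\<alpha><..<\<beta>} x * \<psi> (x - \<alpha>) + indicator {\<alpha><..<\<beta>} x * \<psi> (\<beta> - x)" for x
  proof (cases "x - \<alpha> \<le> \<beta> - x")
    case True
    then have "min (x - \<alpha>) (\<beta> - x) = x - \<alpha>" by simp
    then show ?thesis by (simp add: add_increasing2)
  next
    case False
    then have "min (x - \<alpha>) (\<beta> - x) = \<beta> - x" by simp
    then show ?thesis by (simp add: add_increasing)
  qed
  have "(\<integral>\<^sup>+ x. indicator {\<alpha><..<\<beta>} x * \<psi> (min (x - \<alpha>) (\<beta> - x)) \<partial>lborel)
     \<le> (\<integral>\<^sup>+ x. indicator {\<alpha><..<\<beta>} x * \<psi> (x - \<alpha>) + indicator {\<alpha><..<\<beta>} x * \<psi> (\<beta> - x) \<partial>lborel)"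
    by (intro nn_integral_mono pw)
  also have "\<dots> = (\<integral>\<^sup>+ x. indicator {\<alpha><..<\<beta>} x * \<psi> (x - \<alpha>) \<partial>lborel) + (\<integral>\<^sup>+ x. indicator {\<alpha><..<\<beta>} x * \<psi> (\<beta> - x) \<partial>lborel)"
    by (rule nn_integral_add) measurable
  also have "(\<integral>\<^sup>+ x. indicator {\<alpha><..<\<beta>} x * \<psi> (x - \<alpha>) \<partial>lborel) = (\<integral>\<^sup>+ t. indicator {0<..<\<beta>-\<alpha>} t * \<psi> t \<partial>lborel)"
  proof -
    have "(\<integral>\<^sup>+ x. indicator {\<alpha><..<\<beta>} x * \<psi> (x - \<alpha>) \<partial>lborel)
      = ennreal \<bar>1\<bar> * (\<integral>\<^sup>+ x. indicator {\<alpha><..<\<beta>} (\<alpha> + 1 * x) * \<psi> ((\<alpha> + 1 * x) - \<alpha>) \<partial>lborel)"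
    proof -
      have m: "(\<lambda>x. indicator {\<alpha><..<\<beta>} x * \<psi> (x - \<alpha>)) \<in> borel_measurable borel" by measurable
      show ?thesis by (rule nn_integral_real_affine[OF m, of 1 \<alpha>]) simp
    qed
    also have "(\<lambda>x. indicator {\<alpha><..<\<beta>} (\<alpha> + 1 * x) * \<psi> ((\<alpha> + 1 * x) - \<alpha>)) = (\<lambda>x. indicator {0<..<\<beta>-\<alpha>} x * \<psi> x)"
    proof
      fix x :: real
      have "(\<alpha> + 1 * x \<in> {\<alpha><..<\<beta>}) = (x \<in> {0<..<\<beta>-\<alpha>})" by auto
      then show "indicator {\<alpha><..<\<beta>} (\<alpha> + 1 * x) * \<psi> ((\<alpha> + 1 * x) - \<alpha>) = indicator {0<..<\<beta>-\<alpha>} x * \<psi> x"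
        unfolding indicator_def by simp
    qed
    finally show ?thesis by simp
  qed
  also have "(\<integral>\<^sup>+ x. indicator {\<alpha><..<\<beta>} x * \<psi> (\<beta> - x) \<partial>lborel) = (\<integral>\<^sup>+ t. indicator {0<..<\<beta>-\<alpha>} t * \<psi> t \<partial>lborel)"
  proof -
    have "(\<integral>\<^sup>+ x. indicator {\<alpha><..<\<beta>} x * \<psi> (\<beta> - x) \<partial>lborel)
      = ennreal \<bar>-1\<bar> * (\<integral>\<^sup>+ x. indicator {\<alpha><..<\<beta>} (\<beta> + (-1) * x) * \<psi> (\<beta> - (\<beta> + (-1) * x)) \<partial>lborel)"
    proof -
      have m: "(\<lambda>x. indicator {\<alpha><..<\<beta>} x * \<psi> (\<beta> - x)) \<in> borel_measurable borel" by measurable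
      show ?thesis by (rule nn_integral_real_affine[OF m, of "-1" \<beta>]) simp
    qed
    also have "(\<lambda>x. indicator {\<alpha><..<\<beta>} (\<beta> + (-1) * x) * \<psi> (\<beta> - (\<beta> + (-1) * x))) = (\<lambda>x. indicator {0<..<\<beta>-\<alpha>} x * \<psi> x)"
    proof
      fix x :: real
      have "(\<beta> + (-1) * x \<in> {\<alpha><..<\<beta>}) = (x \<in> {0<..<\<beta>-\<alpha>})" by auto
      moreover have "\<beta> - (\<beta> + (-1) * x) = x" by simp
      ultimately show "indicator {\<alpha><..<\<beta>} (\<beta> + (-1) * x) * \<psi> (\<beta> - (\<beta> + (-1) * x)) = indicator {0<..<\<beta>-\<alpha>} x * \<psi> x"
        unfolding indicator_def by simp
    qed
    finally show ?thesis by simp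
  qed
  finally show ?thesis by (simp only: mult_2)
qed

lemma summable_nn_fin:
  fixes g :: "'i \<Rightarrow> real" assumes "g summable_on I" "\<And>i. i\<in>I \<Longrightarrow> 0 \<le> g i"
  shows "(\<integral>\<^sup>+ i. ennreal (g i) \<partial>count_space I) < \<infinity>"
proof -
  have "Infinite_Sum.abs_summable_on g I"
    using assms(1) summable_on_iff_abs_summable_on_real by blast
  then have "Infinite_Set_Sum.abs_summable_on g I"
    using abs_summable_equivalent by blast
  then have "integrable (count_space I) g" by (simp add: abs_summable_on_def)
  from integrableD(2)[OF this] have "(\<integral>\<^sup>+ i. ennreal (g i) \<partial>count_space I) \<noteq> \<infinity>" by simp
  then show ?thesis by (simp add: less_top)
qed

lemma young:
  fixes y s \<delta> :: real assumes "0 \<le> y" "0 < \<delta>"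
  shows "\<delta> * (y * s) \<le> y * max 0 (ln y) + exp (\<delta> * s)"
proof (cases "y = 0")
  case True then show ?thesis by simp
next
  case False
  then have y: "0 < y" using assms by simp
  have "y * (1 + (\<delta> * s - ln y)) \<le> y * exp (\<delta> * s - ln y)"
    using y by (intro mult_left_mono exp_ge_add_one_self) auto
  also have "\<dots> = exp (\<delta> * s)" using y by (simp add: exp_diff)
  finally have "y + \<delta> * (y * s) - y * ln y \<le> exp (\<delta> * s)" by (simp add: algebra_simps)
  moreover have "y * ln y \<le> y * max 0 (ln y)" using y by (intro mult_left_mono) auto
  ultimately show ?thesis using y by linarith
qed

lemma exp_abs_ln:
  fixes l \<delta> :: real assumes "0 < l"
  shows "exp (\<delta> * \<bar>ln l\<bar>) \<le> l powr (-\<delta>) + l powr \<delta>"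
proof (cases "ln l \<ge> 0")
  case True
  then have "exp (\<delta> * \<bar>ln l\<bar>) = l powr \<delta>" using assms by (simp add: powr_def)
  then show ?thesis by simp
next
  case False
  then have "exp (\<delta> * \<bar>ln l\<bar>) = l powr (-\<delta>)" using assms by (simp add: powr_def)
  then show ?thesis by simp
qed

lemma ln_bound:
  fixes L :: real assumes L: "0 < L"
  shows "(\<integral>\<^sup>+ t. indicator {0<..<L} t * ennreal \<bar>ln t\<bar> \<partial>lborel) \<le> ennreal (L * \<bar>ln L\<bar> + L)"
proof -
  have "(\<integral>\<^sup>+ t. indicator {0<..<L} t * ennreal \<bar>ln t\<bar> \<partial>lborel)
     \<le> (\<integral>\<^sup>+ t. ennreal \<bar>ln L\<bar> * indicator {0<..<L} t + indicator {0<..<L} t * ennreal (- ln (t / L)) \<partial>lborel)"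
  proof (intro nn_integral_mono)
    fix t show "indicator {0<..<L} t * ennreal \<bar>ln t\<bar>
      \<le> ennreal \<bar>ln L\<bar> * indicator {0<..<L} t + indicator {0<..<L} t * ennreal (- ln (t / L))"
    proof (cases "t \<in> {0<..<L}")
      case True
      then have t: "0 < t" "t < L" by auto
      have lt: "ln t < ln L" using t by simp
      have "\<bar>ln t\<bar> \<le> \<bar>ln L\<bar> + (ln L - ln t)" using lt by (cases "0 \<le> ln t"; cases "0 \<le> ln L") auto
      then have "\<bar>ln t\<bar> \<le> \<bar>ln L\<bar> + (- ln (t / L))" using t L by (simp add: ln_div)
      moreover have "- ln (t / L) \<ge> 0" using t L by (auto simp: ln_div)
      ultimately have "ennreal \<bar>ln t\<bar> \<le> ennreal \<bar>ln L\<bar> + ennreal (- ln (t / L))"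
        by (simp add: ennreal_plus[symmetric] ennreal_leI)
      then show ?thesis using True by simp
    qed simp
  qed
  also have "\<dots> = (\<integral>\<^sup>+ t. ennreal \<bar>ln L\<bar> * indicator {0<..<L} t \<partial>lborel) + (\<integral>\<^sup>+ t. indicator {0<..<L} t * ennreal (- ln (t / L)) \<partial>lborel)"
    by (rule nn_integral_add) auto
  also have "\<dots> = ennreal \<bar>ln L\<bar> * ennreal L + ennreal L"
    using L by (simp add: nn_integral_cmult_indicator nn_ln_int)
  also have "\<dots> = ennreal (\<bar>ln L\<bar> * L) + ennreal L"
    using L by (subst ennreal_mult) auto
  also have "\<dots> = ennreal (L * \<bar>ln L\<bar> + L)"
    using L by (subst ennreal_plus) (auto simp: mult_ac)
  finally show ?thesis .
qed

theorem mainTheorem8: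
  fixes f :: "real \<Rightarrow> real" and \<mu> :: "real measure" and A :: "real set"
    and a b :: real and I :: "'i set" and ai bi :: "'i \<Rightarrow> real"
  assumes f_meas: "f \<in> borel_measurable borel"
    and f_nonneg: "\<And>x. f x \<ge> 0"
    and mu_def: "\<mu> = density lborel f"
    and prob: "prob_space \<mu>"
    and supp: "msupp \<mu> \<subseteq> {a..b}"
    and ent: "(\<integral>\<^sup>+ x. ennreal (ln (f x)) \<partial>\<mu>) < \<infinity>"
    and A_borel: "A \<in> sets borel"
    and intervals: "\<And>i. i \<in> I \<Longrightarrow> ai i < bi i"
    and disj: "disjoint_family_on (\<lambda>i. {ai i<..<bi i}) I"
    and decomp: "interior (A \<inter> msupp \<mu>) = (\<Union>i\<in>I. {ai i<..<bi i})"
    and cases: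
      "((\<exists>C. AE x in lborel. x \<in> A \<longrightarrow> f x \<le> C)
          \<and> (\<lambda>i. (bi i - ai i) * \<bar>ln (bi i - ai i)\<bar>) summable_on I)
       \<or> (\<exists>\<delta>. 0 < \<delta> \<and> \<delta> < 1 \<and> (\<lambda>i. (bi i - ai i) powr (1 - \<delta>)) summable_on I)"
  shows "(\<integral>\<^sup>+ x \<in> (\<Union>i\<in>I. {ai i<..<bi i}). ennreal \<bar>ln (endpoint_dist I ai bi x)\<bar> \<partial>\<mu>) < \<infinity>"
proof -
  note f_meas[measurable]
  define U where "U = (\<Union>i\<in>I. {ai i<..<bi i})"
  have UA: "U \<subseteq> A" and Usupp: "U \<subseteq> {a..b}"
    using decomp supp interior_subset[of "A \<inter> msupp \<mu>"] unfolding U_def by blast+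
  have inU: "\<And>i x. i \<in> I \<Longrightarrow> x \<in> {ai i<..<bi i} \<Longrightarrow> x \<in> U" unfolding U_def by blast
  have disj2: "\<And>i j x. i \<in> I \<Longrightarrow> j \<in> I \<Longrightarrow> x \<in> {ai i<..<bi i} \<Longrightarrow> x \<in> {ai j<..<bi j} \<Longrightarrow> i = j"
    using disj unfolding disjoint_family_on_def by blast
  have ab: "a \<le> ai i \<and> bi i \<le> b" if i: "i \<in> I" for i
  proof -
    have sub: "{ai i<..<bi i} \<subseteq> {a..b}" using Usupp inU[OF i] by blast
    have lt: "ai i < bi i" using intervals[OF i] .
    have "a \<le> ai i"
    proof (rule ccontr)
      assume "\<not> a \<le> ai i"
      then have "(ai i + min a (bi i)) / 2 \<in> {ai i<..<bi i}" using lt by (auto simp: min_def)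
      moreover have "(ai i + min a (bi i)) / 2 < a" using lt \<open>\<not> a \<le> ai i\<close> by (auto simp: min_def)
      ultimately show False using sub by (meson atLeastAtMost_iff not_le subsetD)
    qed
    moreover have "bi i \<le> b"
    proof (rule ccontr)
      assume "\<not> bi i \<le> b"
      then have "(bi i + max b (ai i)) / 2 \<in> {ai i<..<bi i}" using lt by (auto simp: max_def)
      moreover have "(bi i + max b (ai i)) / 2 > b" using lt \<open>\<not> bi i \<le> b\<close> by (auto simp: max_def)
      ultimately show False using sub by (meson atLeastAtMost_iff not_le subsetD)
    qed
    ultimately show ?thesis by simp
  qed
  have cI: "countable I"
  proof -
    define q where "q i = (SOME r. r \<in> \<rat> \<and> ai i < r \<and> r < bi i)" for i
    have q: "q i \<in> \<rat> \<and> ai i < q i \<and> q i < bi i" if iI: "i \<in> I" for i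
    proof -
      obtain r where "r \<in> \<rat> \<and> ai i < r \<and> r < bi i" using Rats_dense_in_real[OF intervals[OF iI]] by blast
      then show ?thesis unfolding q_def by (rule someI)
    qed
    have "inj_on q I"
    proof (rule inj_onI)
      fix i j assume "i \<in> I" "j \<in> I" "q i = q j"
      then show "i = j" using disj2[of i j "q i"] q[of i] q[of j] by auto
    qed
    moreover have "countable (q ` I)"
      using q by (intro countable_subset[OF _ countable_rat]) auto
    ultimately show ?thesis using countable_image_inj_on by blast
  qed
  have ell: "endpoint_dist I ai bi x = min (x - ai i) (bi i - x)" if "i \<in> I" "x \<in> {ai i<..<bi i}" for i x
  proof -
    have "(THE j. j \<in> I \<and> x \<in> {ai j<..<bi j}) = i"
      using that disj2 by (intro the_equality) blast+
    then show ?thesis unfolding endpoint_dist_def Let_def by simp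
  qed
  define H where "H \<psi> i x = indicator {ai i<..<bi i} x * \<psi> (min (x - ai i) (bi i - x))"
    for \<psi> :: "real \<Rightarrow> ennreal" and i x
  define \<Phi> where "\<Phi> \<psi> x = (\<integral>\<^sup>+ i. H \<psi> i x \<partial>count_space I)" for \<psi> x
  have \<Phi>_in: "\<Phi> \<psi> x = \<psi> (min (x - ai i) (bi i - x))" if "i \<in> I" "x \<in> {ai i<..<bi i}" for \<psi> i x
  proof -
    have "\<Phi> \<psi> x = (\<Sum>j\<in>{i}. H \<psi> j x)"
      unfolding \<Phi>_def
    proof (rule nn_integral_count_space')
      show "\<And>j. j \<in> I \<Longrightarrow> j \<notin> {i} \<Longrightarrow> H \<psi> j x = 0"
        using that disj2 unfolding H_def by (auto split: split_indicator)
    qed (use that in auto)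
    also have "(\<Sum>j\<in>{i}. H \<psi> j x) = H \<psi> i x" by simp
    finally show ?thesis using that by (simp add: H_def)
  qed
  have \<Phi>_out: "\<Phi> \<psi> x = 0" if "x \<notin> U" for \<psi> x
  proof -
    have "\<Phi> \<psi> x = (\<integral>\<^sup>+ i. 0 \<partial>count_space I)"
      unfolding \<Phi>_def using that inU by (intro nn_integral_cong) (auto simp: H_def split: split_indicator)
    then show ?thesis by simp
  qed
  interpret C: sigma_finite_measure "count_space I"
    by (rule sigma_finite_measure_count_space_countable[OF cI])
  interpret P: pair_sigma_finite "count_space I" lborel
    by (intro pair_sigma_finite.intro C.sigma_finite_measure_axioms lborel.sigma_finite_measure_axioms)
  have Hmeas: "case_prod (H \<psi>) \<in> borel_measurable (count_space I \<Otimes>\<^sub>M lborel)"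
    if [measurable]: "\<psi> \<in> borel_measurable borel" for \<psi>
    by (rule measurable_pair_measure_countable1[OF cI]) (simp add: H_def)
  have \<Phi>meas: "\<Phi> \<psi> \<in> borel_measurable lborel"
    if [measurable]: "\<psi> \<in> borel_measurable borel" for \<psi>
  proof -
    have "(\<lambda>(x, i). H \<psi> i x) \<in> borel_measurable (lborel \<Otimes>\<^sub>M count_space I)"
      using Hmeas[OF that] by (subst measurable_pair_swap_iff) (simp add: case_prod_unfold)
    from C.borel_measurable_nn_integral_fst[OF this] show ?thesis
      unfolding \<Phi>_def by simp
  qed
  have Fub: "(\<integral>\<^sup>+ x. \<Phi> \<psi> x \<partial>lborel) = (\<integral>\<^sup>+ i. (\<integral>\<^sup>+ x. H \<psi> i x \<partial>lborel) \<partial>count_space I)"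
    if "\<psi> \<in> borel_measurable borel" for \<psi>
    unfolding \<Phi>_def by (rule P.Fubini'[OF Hmeas[OF that]])
  have Hint: "(\<integral>\<^sup>+ x. H \<psi> i x \<partial>lborel) \<le> 2 * (\<integral>\<^sup>+ t. indicator {0<..<bi i - ai i} t * \<psi> t \<partial>lborel)"
    if "\<psi> \<in> borel_measurable borel" "i \<in> I" for \<psi> i
    unfolding H_def by (rule refl_bound[OF that(1) intervals[OF that(2)]])
  have muint: "(\<integral>\<^sup>+x. g x \<partial>\<mu>) = (\<integral>\<^sup>+x. ennreal (f x) * g x \<partial>lborel)"
    if "g \<in> borel_measurable borel" for g
    unfolding mu_def using that by (subst nn_integral_density) auto
  have absln_meas: "(\<lambda>t::real. ennreal \<bar>ln t\<bar>) \<in> borel_measurable borel" by measurable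
  have goal_eq: "(\<integral>\<^sup>+ x \<in> U. ennreal \<bar>ln (endpoint_dist I ai bi x)\<bar> \<partial>\<mu>)
      = (\<integral>\<^sup>+ x. \<Phi> (\<lambda>t. ennreal \<bar>ln t\<bar>) x \<partial>\<mu>)"
  proof (intro nn_integral_cong)
    fix x show "ennreal \<bar>ln (endpoint_dist I ai bi x)\<bar> * indicator U x = \<Phi> (\<lambda>t. ennreal \<bar>ln t\<bar>) x"
    proof (cases "x \<in> U")
      case True
      then obtain i where "i \<in> I" "x \<in> {ai i<..<bi i}" unfolding U_def by blast
      then show ?thesis using True by (simp add: \<Phi>_in ell)
    qed (simp add: \<Phi>_out)
  qed
  have finab: "emeasure lborel {a..b} < \<infinity>" by (simp add: emeasure_lborel_Icc_eq)
  have sumL: "(\<integral>\<^sup>+ i. ennreal (bi i - ai i) \<partial>count_space I) < \<infinity>"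
  proof -
    have "emeasure lborel U = (\<integral>\<^sup>+ i. emeasure lborel {ai i<..<bi i} \<partial>count_space I)"
      unfolding U_def by (rule emeasure_UN_countable[OF _ cI disj]) auto
    also have "\<dots> = (\<integral>\<^sup>+ i. ennreal (bi i - ai i) \<partial>count_space I)"
      using intervals by (intro nn_integral_cong) (auto simp: less_imp_le)
    finally have "(\<integral>\<^sup>+ i. ennreal (bi i - ai i) \<partial>count_space I) = emeasure lborel U" by simp
    also have "\<dots> \<le> emeasure lborel {a..b}" using Usupp by (intro emeasure_mono) auto
    finally show ?thesis using finab by (simp add: le_less_trans)
  qed
  have "(\<integral>\<^sup>+ x. \<Phi> (\<lambda>t. ennreal \<bar>ln t\<bar>) x \<partial>\<mu>) < \<infinity>"
    using cases
  proof
    assume ca: "(\<exists>C. AE x in lborel. x \<in> A \<longrightarrow> f x \<le> C)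
          \<and> (\<lambda>i. (bi i - ai i) * \<bar>ln (bi i - ai i)\<bar>) summable_on I"
    then obtain C where C: "AE x in lborel. x \<in> A \<longrightarrow> f x \<le> C" by blast
    from ca have sa: "(\<lambda>i. (bi i - ai i) * \<bar>ln (bi i - ai i)\<bar>) summable_on I" by blast
    let ?\<psi> = "\<lambda>t::real. ennreal \<bar>ln t\<bar>"
    have "(\<integral>\<^sup>+ x. \<Phi> ?\<psi> x \<partial>lborel) = (\<integral>\<^sup>+ i. (\<integral>\<^sup>+ x. H ?\<psi> i x \<partial>lborel) \<partial>count_space I)"
      by (rule Fub[OF absln_meas])
    also have "\<dots> \<le> (\<integral>\<^sup>+ i. 2 * ennreal ((bi i - ai i) * \<bar>ln (bi i - ai i)\<bar>) + 2 * ennreal (bi i - ai i) \<partial>count_space I)"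
    proof (intro nn_integral_mono)
      fix i assume "i \<in> space (count_space I)"
      then have i: "i \<in> I" by simp
      have "(\<integral>\<^sup>+ x. H ?\<psi> i x \<partial>lborel) \<le> 2 * (\<integral>\<^sup>+ t. indicator {0<..<bi i - ai i} t * ?\<psi> t \<partial>lborel)"
        by (rule Hint[OF absln_meas i])
      also have "\<dots> \<le> 2 * ennreal ((bi i - ai i) * \<bar>ln (bi i - ai i)\<bar> + (bi i - ai i))"
        using intervals[OF i] by (intro mult_left_mono ln_bound) auto
      also have "\<dots> = 2 * ennreal ((bi i - ai i) * \<bar>ln (bi i - ai i)\<bar>) + 2 * ennreal (bi i - ai i)"
        using intervals[OF i] by (simp add: ennreal_plus distrib_left less_imp_le)
      finally show "(\<integral>\<^sup>+ x. H ?\<psi> i x \<partial>lborel) \<le> 2 * ennreal ((bi i - ai i) * \<bar>ln (bi i - ai i)\<bar>) + 2 * ennreal (bi i - ai i)" .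
    qed
    also have "\<dots> = 2 * (\<integral>\<^sup>+ i. ennreal ((bi i - ai i) * \<bar>ln (bi i - ai i)\<bar>) \<partial>count_space I)
        + 2 * (\<integral>\<^sup>+ i. ennreal (bi i - ai i) \<partial>count_space I)"
      by (subst nn_integral_add) (auto simp: nn_integral_cmult)
    also have "\<dots> < \<infinity>"
    proof -
      have "(\<integral>\<^sup>+ i. ennreal ((bi i - ai i) * \<bar>ln (bi i - ai i)\<bar>) \<partial>count_space I) < \<infinity>"
        using sa intervals by (intro summable_nn_fin) (auto simp: less_imp_le)
      then show ?thesis using sumL by (simp add: ennreal_mult_less_top)
    qed
    finally have I1: "(\<integral>\<^sup>+ x. \<Phi> ?\<psi> x \<partial>lborel) < \<infinity>" .
    have "(\<integral>\<^sup>+ x. \<Phi> ?\<psi> x \<partial>\<mu>) = (\<integral>\<^sup>+ x. ennreal (f x) * \<Phi> ?\<psi> x \<partial>lborel)"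
      using \<Phi>meas[OF absln_meas] by (intro muint) simp
    also have "\<dots> \<le> (\<integral>\<^sup>+ x. ennreal C * \<Phi> ?\<psi> x \<partial>lborel)"
    proof (rule nn_integral_mono_AE)
      show "AE x in lborel. ennreal (f x) * \<Phi> ?\<psi> x \<le> ennreal C * \<Phi> ?\<psi> x"
        using C
      proof eventually_elim
        case (elim x)
        show ?case
        proof (cases "x \<in> U")
          case True
          then have "f x \<le> C" using elim UA by blast
          then show ?thesis by (intro mult_right_mono ennreal_leI) auto
        qed (simp add: \<Phi>_out)
      qed
    qed
    also have "\<dots> = ennreal C * (\<integral>\<^sup>+ x. \<Phi> ?\<psi> x \<partial>lborel)"
      using \<Phi>meas[OF absln_meas] by (simp add: nn_integral_cmult)
    also have "\<dots> < \<infinity>" using I1 by (simp add: ennreal_mult_less_top)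
    finally show ?thesis .
  next
    assume "\<exists>\<delta>. 0 < \<delta> \<and> \<delta> < 1 \<and> (\<lambda>i. (bi i - ai i) powr (1 - \<delta>)) summable_on I"
    then obtain \<delta> where d: "0 < \<delta>" "\<delta> < 1" and sb: "(\<lambda>i. (bi i - ai i) powr (1 - \<delta>)) summable_on I" by blast
    let ?\<psi> = "\<lambda>t::real. ennreal \<bar>ln t\<bar>"
    let ?\<psi>b = "\<lambda>t::real. ennreal (t powr (-\<delta>))"
    define K where "K = (b - a) powr \<delta>"
    have K: "K \<ge> 0" unfolding K_def by simp
    have psib_meas: "?\<psi>b \<in> borel_measurable borel" by measurable
    have pw: "ennreal (f x) * \<Phi> ?\<psi> x \<le> ennreal (1/\<delta>) *
        (ennreal (f x) * ennreal (ln (f x)) + \<Phi> ?\<psi>b x + ennreal K * indicator {a..b} x)" for x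
    proof (cases "x \<in> U")
      case True
      then obtain i where i: "i \<in> I" "x \<in> {ai i<..<bi i}" unfolding U_def by blast
      define l where "l = min (x - ai i) (bi i - x)"
      have l: "0 < l" "l \<le> b - a" using i ab[OF i(1)] by (auto simp: l_def min_def)
      have xab: "x \<in> {a..b}" using True Usupp by blast
      have y: "0 \<le> f x" by (rule f_nonneg)
      have "\<delta> * (f x * \<bar>ln l\<bar>) \<le> f x * max 0 (ln (f x)) + exp (\<delta> * \<bar>ln l\<bar>)"
        by (rule young[OF y d(1)])
      also have "exp (\<delta> * \<bar>ln l\<bar>) \<le> l powr (-\<delta>) + l powr \<delta>" by (rule exp_abs_ln[OF l(1)])
      also have "l powr \<delta> \<le> K" unfolding K_def using l d by (intro powr_mono2) auto
      finally have "\<delta> * (f x * \<bar>ln l\<bar>) \<le> f x * max 0 (ln (f x)) + l powr (-\<delta>) + K" by simp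
      then have r: "f x * \<bar>ln l\<bar> \<le> (1/\<delta>) * (f x * max 0 (ln (f x)) + l powr (-\<delta>) + K)"
        using d by (simp add: field_simps)
      have e1: "ennreal (f x) * ennreal (ln (f x)) = ennreal (f x * max 0 (ln (f x)))"
        using y by (cases "ln (f x) \<ge> 0") (auto simp: ennreal_mult ennreal_neg max_def)
      have "ennreal (f x) * \<Phi> ?\<psi> x = ennreal (f x * \<bar>ln l\<bar>)"
        using i y by (simp add: \<Phi>_in l_def ennreal_mult)
      also have "\<dots> \<le> ennreal ((1/\<delta>) * (f x * max 0 (ln (f x)) + l powr (-\<delta>) + K))"
        by (rule ennreal_leI[OF r])
      also have "\<dots> = ennreal (1/\<delta>) * (ennreal (f x * max 0 (ln (f x))) + ennreal (l powr (-\<delta>)) + ennreal K)"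
      proof -
        have n1: "0 \<le> f x * max 0 (ln (f x))" using y by simp
        have n2: "0 \<le> l powr (-\<delta>)" by simp
        have "ennreal ((1/\<delta>) * (f x * max 0 (ln (f x)) + l powr (-\<delta>) + K))
          = ennreal (1/\<delta>) * ennreal (f x * max 0 (ln (f x)) + l powr (-\<delta>) + K)"
          using d n1 n2 K by (intro ennreal_mult) auto
        also have "ennreal (f x * max 0 (ln (f x)) + l powr (-\<delta>) + K)
          = ennreal (f x * max 0 (ln (f x))) + ennreal (l powr (-\<delta>)) + ennreal K"
          using n1 n2 K by (simp only: ennreal_plus add_nonneg_nonneg)
        finally show ?thesis .
      qed
      also have "\<dots> = ennreal (1/\<delta>) *
        (ennreal (f x) * ennreal (ln (f x)) + \<Phi> ?\<psi>b x + ennreal K * indicator {a..b} x)"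
        using i xab by (simp add: e1 \<Phi>_in l_def)
      finally show ?thesis .
    qed (simp add: \<Phi>_out)
    have "(\<integral>\<^sup>+ x. \<Phi> ?\<psi> x \<partial>\<mu>) = (\<integral>\<^sup>+ x. ennreal (f x) * \<Phi> ?\<psi> x \<partial>lborel)"
      using \<Phi>meas[OF absln_meas] by (intro muint) simp
    also have "\<dots> \<le> (\<integral>\<^sup>+ x. ennreal (1/\<delta>) *
        (ennreal (f x) * ennreal (ln (f x)) + \<Phi> ?\<psi>b x + ennreal K * indicator {a..b} x) \<partial>lborel)"
      by (intro nn_integral_mono pw)
    also have "\<dots> = ennreal (1/\<delta>) * ((\<integral>\<^sup>+ x. ennreal (f x) * ennreal (ln (f x)) \<partial>lborel)
        + (\<integral>\<^sup>+ x. \<Phi> ?\<psi>b x \<partial>lborel) + (\<integral>\<^sup>+ x. ennreal K * indicator {a..b} x \<partial>lborel))"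
      using \<Phi>meas[OF psib_meas] by (simp add: nn_integral_cmult nn_integral_add)
    also have "\<dots> < \<infinity>"
    proof -
      have t1: "(\<integral>\<^sup>+ x. ennreal (f x) * ennreal (ln (f x)) \<partial>lborel) < \<infinity>"
        using ent muint[of "\<lambda>x. ennreal (ln (f x))"] by simp
      have "(\<integral>\<^sup>+ x. \<Phi> ?\<psi>b x \<partial>lborel) = (\<integral>\<^sup>+ i. (\<integral>\<^sup>+ x. H ?\<psi>b i x \<partial>lborel) \<partial>count_space I)"
        by (rule Fub[OF psib_meas])
      also have "\<dots> \<le> (\<integral>\<^sup>+ i. ennreal (2 / (1 - \<delta>) * (bi i - ai i) powr (1 - \<delta>)) \<partial>count_space I)"
      proof (intro nn_integral_mono)
        fix i assume "i \<in> space (count_space I)"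
        then have i: "i \<in> I" by simp
        have "(\<integral>\<^sup>+ x. H ?\<psi>b i x \<partial>lborel) \<le> 2 * (\<integral>\<^sup>+ t. indicator {0<..<bi i - ai i} t * ?\<psi>b t \<partial>lborel)"
          by (rule Hint[OF psib_meas i])
        also have "\<dots> = 2 * ennreal ((bi i - ai i) powr (1 - \<delta>) / (1 - \<delta>))"
          using intervals[OF i] d by (simp add: nn_powr_int)
        also have "\<dots> = ennreal (2 / (1 - \<delta>) * (bi i - ai i) powr (1 - \<delta>))"
          using d by (subst numeral_mult_ennreal) (auto simp: field_simps)
        finally show "(\<integral>\<^sup>+ x. H ?\<psi>b i x \<partial>lborel) \<le> ennreal (2 / (1 - \<delta>) * (bi i - ai i) powr (1 - \<delta>))" .
      qed
      also have "\<dots> < \<infinity>"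
        using d by (intro summable_nn_fin summable_on_cmult_right sb) auto
      finally have t2: "(\<integral>\<^sup>+ x. \<Phi> ?\<psi>b x \<partial>lborel) < \<infinity>" .
      have t3: "(\<integral>\<^sup>+ x. ennreal K * indicator {a..b} x \<partial>lborel) < \<infinity>"
        using finab by (simp add: nn_integral_cmult_indicator ennreal_mult_less_top)
      show ?thesis using t1 t2 t3 by (simp add: ennreal_mult_less_top)
    qed
    finally show ?thesis .
  qed
  then show ?thesis using goal_eq unfolding U_def by simp
qed

end
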